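(* Let $\ell\ge 1$ and $n,m_1,\dots,m_\ell$ be positive integers, $m:=\sum_{i=1}^\ell m_i$. For $i=1,\dots,\ell$ let $C_i\subseteq\mathbb{R}^{m_i}$ be a nonempty closed convex set and $A_i\in\mathbb{R}^{m_i\times n}$ a nonzero matrix, and let $\bar v\in\mathbb{R}^n$. Assume $\bigcap_{i=1}^\ell A_i^{-1}\operatorname{ri}C_i\neq\emptyset$. Let $\mathbf A\in\mathbb{R}^{m\times n}$ with $\mathbf A^T=[A_1^T\ \cdots\ A_\ell^T]$, $D:=C_1\times\cdots\times C_\ell$, $f(x):=\frac12\|x-\bar v\|^2$, $d(\mathbf y):=\frac12\|\mathbf A^T\mathbf y-\bar v\|^2-\frac12\|\bar v\|^2+\sigma_D(\mathbf y)$, $d^*:=\inf d$, and $q(\mathbf y):=\inf_{x\in\mathbb{R}^n}\{f(x)+\delta_D(\mathbf Ax+\mathbf y)\}$ for $\mathbf y\in\mathbb{R}^m$. Then $\mathbf 0\in\operatorname{ri}\operatorname{dom}q$. Moreover, $d(\mathbf y)=q^*(\mathbf y)$ for all $\mathbf y$, and $$\operatorname{Argmin} d=\partial q_E(\mathbf 0)+E^\perp\neq\emptyset,$$ where $q_E(\mathbf y):=q(\operatorname{Proj}_E(\mathbf y))$ and $E:=\operatorname{span}(\operatorname{dom}q)=\operatorname{span}(D-\operatorname{Range}(\mathbf A))$. Furthermore, every sequence $\{\mathbf z^t\}\subseteq\mathbb{R}^m$ with $\operatorname{dist}(\mathbf 0,\partial d(\mathbf z^t))\to0$ satisfies $d(\mathbf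 z^t)\to d^*$ and $\operatorname{dist}(\mathbf z^t,\operatorname{Argmin} d)\to0$.
   Context: $A_i^{-1}S:=\{x: A_ix\in S\}$; $\operatorname{ri}$ denotes relative interior; $\delta_D$ is the indicator function of $D$ ($0$ on $D$, $+\infty$ outside); $\sigma_D(\mathbf y):=\sup_{\mathbf u\in D}\langle\mathbf y,\mathbf u\rangle$ is the support function; $q^*$ is the convex conjugate of $q$; $\operatorname{dom}q:=\{\mathbf y: q(\mathbf y)<\infty\}$; $\partial$ is the convex subdifferential; $\operatorname{Proj}_E$ is the orthogonal projection onto the subspace $E$. *)

theory Defs
  imports "HOL-Analysis.Analysis"
begin

definition support_fun :: "'a::real_inner set \<Rightarrow> 'a \<Rightarrow> ereal" where
  "support_fun D y = (SUP u\<in>D. ereal (inner y u))"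

definition conjugate :: "('a::real_inner \<Rightarrow> ereal) \<Rightarrow> 'a \<Rightarrow> ereal" where
  "conjugate g y = (SUP z. ereal (inner y z) - g z)"

definition edom :: "('a \<Rightarrow> ereal) \<Rightarrow> 'a set" where
  "edom g = {y. g y < \<infinity>}"

definition subdiff :: "('a::real_inner \<Rightarrow> ereal) \<Rightarrow> 'a \<Rightarrow> 'a set" where
  "subdiff g x = {v. \<bar>g x\<bar> \<noteq> \<infinity> \<and> (\<forall>z. g x + ereal (inner v (z - x)) \<le> g z)}"

definition argmin_set :: "('a \<Rightarrow> ereal) \<Rightarrow> 'a set" where
  "argmin_set g = {y. \<forall>z. g y \<le> g z}"

text \<open>Distance from a point to a set, with the convention dist(x, {}) = +infinity.\<close>
definition edist_set :: "'a::metric_space \<Rightarrow> 'a set \<Rightarrow> ereal" where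
  "edist_set x S = (INF y\<in>S. ereal (dist x y))"

definition proj_sub :: "'a::euclidean_space set \<Rightarrow> 'a \<Rightarrow> 'a" where
  "proj_sub E y = closest_point E y"

text \<open>Block structure: coordinates j of R^m with blk j = i form the i-th block R^(m_i).
  block_part blk i y keeps the i-th block of y and zeroes the rest; a subset of R^(m_i)
  is represented as a subset of R^m supported on block i.\<close>
definition block_part :: "('m \<Rightarrow> nat) \<Rightarrow> nat \<Rightarrow> real^'m \<Rightarrow> real^'m" where
  "block_part blk i y = (\<chi> j. if blk j = i then y $ j else 0)"

definition block_space :: "('m \<Rightarrow> nat) \<Rightarrow> nat \<Rightarrow> (real^'m) set" where
  "block_space blk i = {y. \<forall>j. blk j \<noteq> i \<longrightarrow> y $ j = 0}"

end

theory Submission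
  imports Defs
begin

lemma inner_transpose: "inner (A *v x) y = inner x (transpose A *v (y::real^'m))"
  for A :: "real^'n^'m"
  by (metis dot_lmul_matrix inner_commute transpose_matrix_vector)

lemma half_aux: fixes X a b u :: real shows "X \<le> u*a + (1-u)*b \<Longrightarrow> 1/2*X \<le> u*(1/2*a) + (1-u)*(1/2*b)"
proof -
  assume h: "X \<le> u*a + (1-u)*b"
  have "u*(1/2*a) + (1-u)*(1/2*b) = (u*a + (1-u)*b)/2" by (simp add: field_simps)
  then show ?thesis using h by linarith
qed

locale dualsetup =
  fixes A :: "real^'n::finite^'m::finite" and D :: "(real^'m) set" and vbar :: "real^'n"
    and f :: "real^'n \<Rightarrow> real" and q :: "real^'m \<Rightarrow> ereal" and d :: "real^'m \<Rightarrow> ereal"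
  assumes D_convex: "convex D" and D_ne: "D \<noteq> {}"
    and f_def: "\<forall>x. f x = (1/2) * (norm (x - vbar))\<^sup>2"
    and d_def: "\<forall>y. d y = ereal ((1/2) * (norm (transpose A *v y - vbar))\<^sup>2
                               - (1/2) * (norm vbar)\<^sup>2) + support_fun D y"
    and q_def: "\<forall>y. q y = (INF x\<in>{x. A *v x + y \<in> D}. ereal (f x))"
    and ri0: "0 \<in> rel_interior {c - A *v x | c x. c \<in> D}"
begin

definition "QQ = {c - A *v x | c x. c \<in> D}"
definition "qr z = real_of_ereal (q z)"
definition "EE = span QQ"
definition "PP = closest_point EE"

lemma f_eq: "f x = (1/2) * (norm (x - vbar))\<^sup>2" using f_def by blast

lemma f_ge0: "0 \<le> f x" unfolding f_eq by simp

lemma q_ge0: "0 \<le> q z"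
  unfolding q_def[rule_format] by (rule INF_greatest) (simp add: f_ge0)

lemma q_le: "A *v x + z \<in> D \<Longrightarrow> q z \<le> ereal (f x)"
  unfolding q_def[rule_format] by (rule INF_lower) simp

lemma QQ_iff: "z \<in> QQ \<longleftrightarrow> (\<exists>x. A *v x + z \<in> D)"
  unfolding QQ_def
  by (auto simp: algebra_simps)

lemma q_notQ: "z \<notin> QQ \<Longrightarrow> q z = \<infinity>"
  unfolding q_def[rule_format] QQ_iff by (simp add: top_ereal_def)

lemma q_fin: "z \<in> QQ \<Longrightarrow> q z = ereal (qr z)"
proof -
  assume "z \<in> QQ"
  then obtain x where x: "A *v x + z \<in> D" using QQ_iff by blast
  have "q z \<le> ereal (f x)" using q_le[OF x] .
  moreover have "0 \<le> q z" by (rule q_ge0)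
  ultimately have "\<bar>q z\<bar> \<noteq> \<infinity>" by auto
  then show ?thesis unfolding qr_def using ereal_real' by metis
qed

lemma qr_ge0: "0 \<le> qr z"
  unfolding qr_def using q_ge0 by (simp add: real_of_ereal_pos)

lemma qr_le: "A *v x + z \<in> D \<Longrightarrow> qr z \<le> f x"
proof -
  assume a: "A *v x + z \<in> D"
  then have "z \<in> QQ" using QQ_iff by blast
  then show ?thesis using q_le[OF a] q_fin by simp
qed

lemma qr_approx: "z \<in> QQ \<Longrightarrow> e > 0 \<Longrightarrow> \<exists>x. A *v x + z \<in> D \<and> f x < qr z + e"
proof -
  assume z: "z \<in> QQ" and e: "e > 0"
  have "q z < ereal (qr z + e)" using q_fin[OF z] e by simp
  then show ?thesis unfolding q_def[rule_format] by (auto simp: INF_less_iff)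
qed

lemma f_convex: "0 \<le> u \<Longrightarrow> u \<le> 1 \<Longrightarrow> f (u *\<^sub>R a + (1-u) *\<^sub>R b) \<le> u * f a + (1-u) * f b"
proof -
  assume u: "0 \<le> u" "u \<le> 1"
  let ?p = "a - vbar" and ?s = "b - vbar"
  have eq: "u *\<^sub>R a + (1-u) *\<^sub>R b - vbar = u *\<^sub>R ?p + (1-u) *\<^sub>R ?s"
    by (simp add: algebra_simps)
  have "u * (norm ?p)\<^sup>2 + (1-u) * (norm ?s)\<^sup>2 - (norm (u *\<^sub>R ?p + (1-u) *\<^sub>R ?s))\<^sup>2
        = u * (1-u) * (norm (?p - ?s))\<^sup>2"
    by (simp add: power2_norm_eq_inner inner_add inner_diff algebra_simps inner_commute)
  moreover have "0 \<le> u * (1-u) * (norm (?p - ?s))\<^sup>2" using u by simp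
  ultimately have "(norm (u *\<^sub>R ?p + (1-u) *\<^sub>R ?s))\<^sup>2 \<le> u * (norm ?p)\<^sup>2 + (1-u) * (norm ?s)\<^sup>2"
    by linarith
  then show ?thesis unfolding f_eq eq by (rule half_aux)
qed

lemma Avx_comb: "A *v (u *\<^sub>R x1 + v *\<^sub>R x2) + (u *\<^sub>R z1 + v *\<^sub>R z2)
   = u *\<^sub>R (A *v x1 + z1) + v *\<^sub>R (A *v x2 + z2)"
  by (simp add: algebra_simps)

lemma QQ_convex: "convex QQ"
  unfolding convex_def
proof (intro ballI allI impI)
  fix z1 z2 and u v :: real
  assume z: "z1 \<in> QQ" "z2 \<in> QQ" and uv: "0 \<le> u" "0 \<le> v" "u + v = 1"
  obtain x1 x2 where x: "A *v x1 + z1 \<in> D" "A *v x2 + z2 \<in> D" using z QQ_iff by blast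
  have "A *v (u *\<^sub>R x1 + v *\<^sub>R x2) + (u *\<^sub>R z1 + v *\<^sub>R z2) \<in> D"
    unfolding Avx_comb using convexD[OF D_convex x(1) x(2)] uv by blast
  then show "u *\<^sub>R z1 + v *\<^sub>R z2 \<in> QQ" using QQ_iff by blast
qed

lemma zero_QQ: "0 \<in> QQ"
  using ri0 rel_interior_subset unfolding QQ_def by blast

lemma qr_convex:
  assumes z: "z1 \<in> QQ" "z2 \<in> QQ" and u: "0 \<le> u" "u \<le> 1"
  shows "qr (u *\<^sub>R z1 + (1-u) *\<^sub>R z2) \<le> u * qr z1 + (1-u) * qr z2"
proof (rule field_le_epsilon)
  fix e :: real assume e: "0 < e"
  obtain x1 where x1: "A *v x1 + z1 \<in> D" "f x1 < qr z1 + e" using qr_approx[OF z(1) e] by blast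
  obtain x2 where x2: "A *v x2 + z2 \<in> D" "f x2 < qr z2 + e" using qr_approx[OF z(2) e] by blast
  have "A *v (u *\<^sub>R x1 + (1-u) *\<^sub>R x2) + (u *\<^sub>R z1 + (1-u) *\<^sub>R z2) \<in> D"
    unfolding Avx_comb using convexD[OF D_convex x1(1) x2(1), of u "1-u"] u by simp
  then have "qr (u *\<^sub>R z1 + (1-u) *\<^sub>R z2) \<le> f (u *\<^sub>R x1 + (1-u) *\<^sub>R x2)"
    by (rule qr_le)
  also have "\<dots> \<le> u * f x1 + (1-u) * f x2" using f_convex u by blast
  also have "\<dots> \<le> u * (qr z1 + e) + (1-u) * (qr z2 + e)"
    using x1 x2 u by (intro add_mono mult_left_mono) auto
  also have "\<dots> = u * qr z1 + (1-u) * qr z2 + e" by (simp add: algebra_simps)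
  finally show "qr (u *\<^sub>R z1 + (1-u) *\<^sub>R z2) \<le> u * qr z1 + (1-u) * qr z2 + e" .
qed

lemma EE_subspace: "subspace EE" unfolding EE_def by (rule subspace_span)
lemma EE_closed: "closed EE" using EE_subspace by (rule closed_subspace)
lemma EE_convex: "convex EE" using EE_subspace by (rule subspace_imp_convex)
lemma zero_EE: "0 \<in> EE" unfolding EE_def by (rule span_zero)
lemma QQ_EE: "QQ \<subseteq> EE" unfolding EE_def by (rule span_superset)

lemma ball_E: "\<exists>\<rho>>0. \<forall>u\<in>EE. norm u < \<rho> \<longrightarrow> u \<in> QQ"
proof -
  have "0 \<in> rel_interior QQ" using ri0 unfolding QQ_def .
  then obtain e where e: "e > 0" "ball 0 e \<inter> affine hull QQ \<subseteq> QQ"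
    unfolding mem_rel_interior_ball by blast
  have "affine hull QQ = span QQ"
    by (rule affine_hull_span_0[OF hull_inc[OF zero_QQ]])
  then have "\<forall>u\<in>EE. norm u < e \<longrightarrow> u \<in> QQ"
    using e unfolding EE_def by (auto simp: dist_norm)
  then show ?thesis using e by blast
qed

lemma PP_in: "PP y \<in> EE"
  unfolding PP_def using EE_closed zero_EE closest_point_in_set by blast

lemma PP_orth: "e \<in> EE \<Longrightarrow> inner (y - PP y) e = 0"
proof -
  assume e: "e \<in> EE"
  have "PP y + e \<in> EE" "PP y - e \<in> EE"
    using e PP_in EE_subspace by (auto simp: subspace_add subspace_diff)
  then have "inner (y - PP y) ((PP y + e) - PP y) \<le> 0" "inner (y - PP y) ((PP y - e) - PP y) \<le> 0"
    unfolding PP_def using closest_point_dot[OF EE_convex EE_closed] by blast+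
  then show ?thesis by simp
qed

lemma PP_char: "u \<in> EE \<Longrightarrow> (\<And>e. e \<in> EE \<Longrightarrow> inner (y - u) e = 0) \<Longrightarrow> PP y = u"
proof -
  assume u: "u \<in> EE" and h: "\<And>e. e \<in> EE \<Longrightarrow> inner (y - u) e = 0"
  let ?w = "PP y - u"
  have w: "?w \<in> EE" using u PP_in EE_subspace by (simp add: subspace_diff)
  have "inner (y - u) ?w = 0" "inner (y - PP y) ?w = 0" using h[OF w] PP_orth[OF w] by auto
  then have "inner ?w ?w = 0" by (simp add: inner_diff_left inner_diff_right) 
  then show ?thesis by simp
qed

lemma PP_self: "u \<in> EE \<Longrightarrow> PP u = u"
  by (rule PP_char) auto

lemma PP_linear: "linear PP"
proof (rule linearI)
  fix a b :: "real^'m"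
  show "PP (a + b) = PP a + PP b"
  proof (rule PP_char)
    show "PP a + PP b \<in> EE" using PP_in EE_subspace subspace_add by blast
    fix e assume e: "e \<in> EE"
    have "inner (a + b - (PP a + PP b)) e = inner (a - PP a) e + inner (b - PP b) e"
      by (simp add: inner_diff_left inner_add_left)
    then show "inner (a + b - (PP a + PP b)) e = 0" using PP_orth[OF e] by simp
  qed
next
  fix c :: real and a :: "real^'m"
  show "PP (c *\<^sub>R a) = c *\<^sub>R PP a"
  proof (rule PP_char)
    show "c *\<^sub>R PP a \<in> EE" using PP_in EE_subspace subspace_scale by blast
    fix e assume e: "e \<in> EE"
    have "inner (c *\<^sub>R a - c *\<^sub>R PP a) e = c * inner (a - PP a) e"
      by (simp add: inner_diff_left algebra_simps)
    then show "inner (c *\<^sub>R a - c *\<^sub>R PP a) e = 0" using PP_orth[OF e] by simp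
  qed
qed

lemma inner_PP: "e \<in> EE \<Longrightarrow> inner y e = inner (PP y) e"
  using PP_orth[of e y] by (simp add: inner_diff_left)

lemma PP_norm: "norm (PP y) \<le> norm y"
proof -
  have "inner (y - PP y) (PP y) = 0" using PP_orth PP_in by blast
  then have "(norm y)\<^sup>2 = (norm (PP y))\<^sup>2 + (norm (y - PP y))\<^sup>2"
    by (simp add: power2_norm_eq_inner inner_diff_left inner_diff_right inner_commute)
  then have "(norm (PP y))\<^sup>2 \<le> (norm y)\<^sup>2" by simp
  then show ?thesis using norm_ge_zero power2_le_imp_le by blast
qed

lemma orth_iff: "w \<in> orthogonal_comp EE \<longleftrightarrow> (\<forall>e\<in>EE. inner e w = 0)"
  unfolding orthogonal_comp_def orthogonal_def by simp

lemma PP_resid: "y - PP y \<in> orthogonal_comp EE"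
  unfolding orth_iff using PP_orth by (simp add: inner_commute)

lemma PP_orthcomp: "w \<in> orthogonal_comp EE \<Longrightarrow> PP w = 0"
proof (rule PP_char)
  assume w: "w \<in> orthogonal_comp EE"
  show "0 \<in> EE" by (rule zero_EE)
  fix e assume "e \<in> EE"
  then have "inner e w = 0" using w orth_iff by blast
  then show "inner (w - 0) e = 0" by (simp add: inner_commute)
qed

end

lemma key_aux:
  fixes w x v :: "'a::real_inner"
  shows "(1/2)*(norm (w - v))\<^sup>2 - (1/2)*(norm v)\<^sup>2 - (- inner w x - (1/2)*(norm (x - v))\<^sup>2)
       = (1/2)*(norm (x - v + w))\<^sup>2"
  unfolding power2_norm_eq_inner
  by (simp add: inner_diff_left inner_diff_right inner_add_left inner_add_right inner_commute[of x w] inner_commute[of v w] inner_commute[of v x] field_simps)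

lemma key_ineq:
  fixes w x v :: "'a::real_inner"
  shows "- inner w x - (1/2)*(norm (x - v))\<^sup>2 \<le> (1/2)*(norm (w - v))\<^sup>2 - (1/2)*(norm v)\<^sup>2"
proof -
  have "0 \<le> (1/2)*(norm (x - v + w))\<^sup>2" by simp
  then show ?thesis using key_aux[where w=w and x=x and v=v] by linarith
qed

lemma key_eq:
  fixes w v :: "'a::real_inner"
  shows "- inner w (v - w) - (1/2)*(norm ((v - w) - v))\<^sup>2 = (1/2)*(norm (w - v))\<^sup>2 - (1/2)*(norm v)\<^sup>2"
proof -
  have "(1/2)*(norm ((v - w) - v + w))\<^sup>2 = 0" by simp
  then show ?thesis using key_aux[where w=w and x="v - w" and v=v] by linarith
qed

context dualsetup begin

definition "KK y = (1/2) * (norm (transpose A *v y - vbar))\<^sup>2 - (1/2) * (norm vbar)\<^sup>2"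

lemma d_eq0: "d y = ereal (KK y) + support_fun D y"
  using d_def KK_def by simp

lemma supp_upper: "c \<in> D \<Longrightarrow> ereal (inner y c) \<le> support_fun D y"
  unfolding support_fun_def by (rule SUP_upper)

lemma d_eq: "d y = conjugate q y"
proof (rule antisym)
  let ?w = "transpose A *v y"
  let ?x0 = "vbar - ?w"
  have "d y = support_fun D y + ereal (KK y)" using d_eq0 by (simp add: ac_simps)
  also have "\<dots> = (SUP c\<in>D. ereal (inner y c) + ereal (KK y))"
    unfolding support_fun_def by (rule SUP_ereal_add_left[symmetric]) (use D_ne in auto)
  also have "\<dots> \<le> conjugate q y"
  proof (rule SUP_least)
    fix c assume c: "c \<in> D"
    let ?z = "c - A *v ?x0"
    have z: "A *v ?x0 + ?z \<in> D" using c by simp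
    then have zQ: "?z \<in> QQ" using QQ_iff by blast
    have "qr ?z \<le> f ?x0" using qr_le[OF z] .
    have "inner y ?z = inner y c - inner y (A *v ?x0)"
      by (simp only: inner_diff_right)
    then have "inner y ?z = inner y c - inner ?w ?x0"
      using inner_transpose[of A ?x0 y] by (simp only: inner_commute)
    moreover have "- inner ?w ?x0 - f ?x0 = KK y"
      unfolding f_eq KK_def using key_eq[of ?w vbar] by simp
    ultimately have "inner y c + KK y \<le> inner y ?z - qr ?z" using \<open>qr ?z \<le> f ?x0\<close> by linarith
    then have "ereal (inner y c) + ereal (KK y) \<le> ereal (inner y ?z) - q ?z"
      using q_fin[OF zQ] by simp
    also have "\<dots> \<le> conjugate q y" unfolding conjugate_def by (rule SUP_upper) simp
    finally show "ereal (inner y c) + ereal (KK y) \<le> conjugate q y" .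
  qed
  finally show "d y \<le> conjugate q y" .
next
  let ?w = "transpose A *v y"
  show "conjugate q y \<le> d y"
    unfolding conjugate_def
  proof (rule SUP_least)
    fix z
    show "ereal (inner y z) - q z \<le> d y"
    proof (cases "z \<in> QQ")
      case False
      then show ?thesis using q_notQ by simp
    next
      case True
      have "ereal (inner y z - qr z) \<le> d y"
      proof (rule ereal_le_epsilon2)
        fix e :: real assume e: "0 < e"
        obtain x where x: "A *v x + z \<in> D" "f x < qr z + e" using qr_approx[OF True e] by blast
        let ?c = "A *v x + z"
        have "inner y z = inner y ?c - inner y (A *v x)"
          by (simp only: inner_add_right)
        then have "inner y z = inner y ?c - inner ?w x"
          using inner_transpose[of A x y] by (simp only: inner_commute)
        moreover have "- inner ?w x - f x \<le> KK y"
          unfolding f_eq KK_def by (rule key_ineq)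
        ultimately have "inner y z - qr z \<le> (KK y + e) + inner y ?c" using x by linarith
        then have "ereal (inner y z - qr z) \<le> ereal (KK y + e) + ereal (inner y ?c)" by simp
        also have "\<dots> \<le> ereal (KK y + e) + support_fun D y"
          by (rule add_left_mono) (rule supp_upper[OF x(1)])
        also have "\<dots> = (ereal (KK y) + ereal e) + support_fun D y" by simp
        also have "\<dots> = d y + ereal e" unfolding d_eq0 by (metis add.assoc add.commute)
        finally show "ereal (inner y z - qr z) \<le> d y + ereal e" .
      qed
      then show ?thesis using q_fin[OF True] by simp
    qed
  qed
qed

lemma d_lower: "z \<in> QQ \<Longrightarrow> ereal (inner y z - qr z) \<le> d y"
proof -
  assume z: "z \<in> QQ"
  have "ereal (inner y z) - q z \<le> conjugate q y" unfolding conjugate_def by (rule SUP_upper) simp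
  then show ?thesis using q_fin[OF z] d_eq by simp
qed

lemma d_le_iff: "d y \<le> ereal r \<longleftrightarrow> (\<forall>z\<in>QQ. inner y z - qr z \<le> r)"
proof
  assume h: "d y \<le> ereal r"
  show "\<forall>z\<in>QQ. inner y z - qr z \<le> r"
  proof
    fix z assume "z \<in> QQ"
    then have "ereal (inner y z - qr z) \<le> ereal r" using d_lower[of z y] h by (blast intro: order_trans)
    then show "inner y z - qr z \<le> r" by simp
  qed
next
  assume h: "\<forall>z\<in>QQ. inner y z - qr z \<le> r"
  show "d y \<le> ereal r" unfolding d_eq conjugate_def
  proof (rule SUP_least)
    fix z show "ereal (inner y z) - q z \<le> ereal r"
      using h q_fin q_notQ by (cases "z \<in> QQ") auto
  qed
qed

lemma d_ge: "ereal (- qr 0) \<le> d y"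
  using d_lower[OF zero_QQ, of y] by simp

lemma d_shift: "w \<in> orthogonal_comp EE \<Longrightarrow> d (y + w) = d y"
proof -
  assume w: "w \<in> orthogonal_comp EE"
  have "ereal (inner (y + w) z) - q z = ereal (inner y z) - q z" for z
  proof (cases "z \<in> QQ")
    case True
    then have "inner z w = 0" using w orth_iff QQ_EE by blast
    then have "inner (y + w) z = inner y z" by (simp add: inner_add_left inner_commute[of w z])
    then show ?thesis by simp
  next
    case False then show ?thesis using q_notQ by simp
  qed
  then show ?thesis unfolding d_eq conjugate_def by simp
qed

lemma d_PP: "d (PP y) = d y"
  using d_shift[OF PP_resid, of "PP y" y] by simp

end

context dualsetup begin

lemma neg_small_in_QQ: "z \<in> QQ \<Longrightarrow> \<exists>e>0. - (e *\<^sub>R z) \<in> QQ"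
proof -
  assume z: "z \<in> QQ"
  obtain \<rho> where \<rho>: "\<rho> > 0" "\<forall>u\<in>EE. norm u < \<rho> \<longrightarrow> u \<in> QQ" using ball_E by blast
  define e where "e = \<rho> / (2 * (norm z + 1))"
  have "norm z + 1 > 0" using norm_ge_zero[of z] by linarith
  then have e: "e > 0" unfolding e_def using \<rho> by (intro divide_pos_pos) auto
  have "- (e *\<^sub>R z) \<in> EE" using z QQ_EE EE_subspace by (auto intro: subspace_neg subspace_scale)
  moreover have "norm (- (e *\<^sub>R z)) < \<rho>"
  proof -
    have "norm (- (e *\<^sub>R z)) = e * norm z" using e by simp
    also have "\<dots> = \<rho> * (norm z / (2 * (norm z + 1)))" unfolding e_def by simp
    also have "\<dots> < \<rho> * 1"
    proof (intro mult_strict_left_mono)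
      have "norm z < 2 * (norm z + 1)" using norm_ge_zero[of z] by (smt (verit))
      then show "norm z / (2 * (norm z + 1)) < 1" using \<open>norm z + 1 > 0\<close> by (simp add: divide_less_eq)
    qed (use \<rho> in auto)
    finally show ?thesis by simp
  qed
  ultimately show ?thesis using \<rho> e by blast
qed

lemma subgrad_exists: "\<exists>g. \<forall>z\<in>QQ. qr 0 + inner g z \<le> qr z"
proof -
  define S where "S = {(w, qr 0) | w. w \<in> orthogonal_comp EE}"
  define T where "T = {(z, t) | z t. z \<in> QQ \<and> qr z < t}"
  have sub_oc: "subspace (orthogonal_comp EE)" by (rule subspace_orthogonal_comp)
  have cS: "convex S"
    unfolding convex_def S_def
  proof (intro ballI allI impI)
    fix p1 p2 and u v :: real
    assume p: "p1 \<in> {(w, qr 0) | w. w \<in> orthogonal_comp EE}" "p2 \<in> {(w, qr 0) | w. w \<in> orthogonal_comp EE}"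
      and uv: "0 \<le> u" "0 \<le> v" "u + v = 1"
    obtain w1 w2 where w: "p1 = (w1, qr 0)" "p2 = (w2, qr 0)" "w1 \<in> orthogonal_comp EE" "w2 \<in> orthogonal_comp EE"
      using p by blast
    have "u *\<^sub>R w1 + v *\<^sub>R w2 \<in> orthogonal_comp EE"
      using w sub_oc by (simp add: subspace_add subspace_scale)
    moreover have "u *\<^sub>R p1 + v *\<^sub>R p2 = (u *\<^sub>R w1 + v *\<^sub>R w2, qr 0)"
      using w uv by (simp add: algebra_simps) (metis distrib_right mult_1 uv(3))
    ultimately show "u *\<^sub>R p1 + v *\<^sub>R p2 \<in> {(w, qr 0) | w. w \<in> orthogonal_comp EE}" by blast
  qed
  have cT: "convex T"
    unfolding convex_def T_def
  proof (intro ballI allI impI)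
    fix p1 p2 and u v :: real
    assume p: "p1 \<in> {(z, t) | z t. z \<in> QQ \<and> qr z < t}" "p2 \<in> {(z, t) | z t. z \<in> QQ \<and> qr z < t}"
      and uv: "0 \<le> u" "0 \<le> v" "u + v = 1"
    obtain z1 t1 z2 t2 where zt: "p1 = (z1, t1)" "p2 = (z2, t2)" "z1 \<in> QQ" "z2 \<in> QQ"
      "qr z1 < t1" "qr z2 < t2"
      using p by blast
    have v: "v = 1 - u" using uv by simp
    have "u *\<^sub>R z1 + v *\<^sub>R z2 \<in> QQ" using QQ_convex zt uv unfolding convex_def by blast
    moreover have "qr (u *\<^sub>R z1 + v *\<^sub>R z2) < u * t1 + v * t2"
    proof -
      have "qr (u *\<^sub>R z1 + v *\<^sub>R z2) \<le> u * qr z1 + v * qr z2"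
        using qr_convex[OF zt(3,4), of u] uv v by simp
      also have "\<dots> < u * t1 + v * t2"
      proof (cases "u = 0")
        case True then show ?thesis using v zt by simp
      next
        case False
        then have "u * qr z1 < u * t1" using uv zt by simp
        moreover have "v * qr z2 \<le> v * t2" using uv zt by (simp add: mult_left_mono)
        ultimately show ?thesis by linarith
      qed
      finally show ?thesis .
    qed
    moreover have "u *\<^sub>R p1 + v *\<^sub>R p2 = (u *\<^sub>R z1 + v *\<^sub>R z2, u * t1 + v * t2)"
      using zt by simp
    ultimately show "u *\<^sub>R p1 + v *\<^sub>R p2 \<in> {(z, t) | z t. z \<in> QQ \<and> qr z < t}" by blast
  qed
  have neS: "S \<noteq> {}" unfolding S_def using sub_oc subspace_0 by blast
  have neT: "T \<noteq> {}" unfolding T_def using zero_QQ by (auto intro!: exI[of _ "qr 0 + 1"])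
  have disj: "S \<inter> T = {}"
  proof (rule ccontr)
    assume "S \<inter> T \<noteq> {}"
    then obtain w where w: "w \<in> orthogonal_comp EE" "w \<in> QQ" "qr w < qr 0"
      unfolding S_def T_def by blast
    have "inner w w = 0" using w orth_iff QQ_EE by blast
    then have "w = 0" by simp
    then show False using w by simp
  qed
  obtain a b where ab: "a \<noteq> 0" "\<forall>x\<in>S. inner a x \<le> b" "\<forall>x\<in>T. inner a x \<ge> b"
    using separating_hyperplane_sets[OF cS cT neS neT disj] by blast
  obtain a1 \<beta> where a: "a = (a1, \<beta>)" by (cases a)
  have hS: "inner a1 w + \<beta> * qr 0 \<le> b" if "w \<in> orthogonal_comp EE" for w
    using ab(2) that unfolding S_def a by auto
  have hT: "inner a1 z + \<beta> * t \<ge> b" if "z \<in> QQ" "qr z < t" for z t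
    using ab(3) that unfolding T_def a by auto
  have a1_orth: "inner a1 w = 0" if w: "w \<in> orthogonal_comp EE" for w
  proof (rule ccontr)
    assume nz: "inner a1 w \<noteq> 0"
    define k where "k = (\<bar>b - \<beta> * qr 0\<bar> + 1) / inner a1 w"
    have "k *\<^sub>R w \<in> orthogonal_comp EE" using w sub_oc by (simp add: subspace_scale)
    then have "inner a1 (k *\<^sub>R w) + \<beta> * qr 0 \<le> b" by (rule hS)
    moreover have "inner a1 (k *\<^sub>R w) = \<bar>b - \<beta> * qr 0\<bar> + 1" unfolding k_def using nz by simp
    ultimately show False by linarith
  qed
  have a1E: "a1 \<in> EE"
  proof -
    have "\<forall>w \<in> orthogonal_comp EE. orthogonal w a1" using a1_orth by (simp add: orthogonal_def inner_commute)
    then have "a1 \<in> orthogonal_comp (orthogonal_comp EE)"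
      unfolding orthogonal_comp_def[of "orthogonal_comp EE"] by simp
    then show ?thesis using orthogonal_comp_self[OF EE_subspace] by simp
  qed
  have b_ge: "\<beta> * qr 0 \<le> b" using hS[of 0] sub_oc subspace_0 by force
  have beta_ge: "\<beta> \<ge> 0"
  proof (rule ccontr)
    assume "\<not> \<beta> \<ge> 0"
    then have bn: "\<beta> < 0" by simp
    define t where "t = qr 0 + 1 + \<bar>b\<bar> / (- \<beta>)"
    have "qr 0 < t" unfolding t_def using bn by (simp add: divide_nonneg_pos)
    then have "b \<le> \<beta> * t" using hT[OF zero_QQ] by simp
    moreover have "\<beta> * t = \<beta> * (qr 0 + 1) - \<bar>b\<bar>" unfolding t_def using bn by (simp add: field_simps)
    moreover have "\<beta> * (qr 0 + 1) < 0" using bn qr_ge0[of 0] by (simp add: mult_neg_pos add_nonneg_pos)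
    ultimately show False by linarith
  qed
  have hT2: "inner a1 z + \<beta> * qr z \<ge> b" if z: "z \<in> QQ" for z
  proof -
    have "b \<le> (inner a1 z + \<beta> * qr z) + e" if e: "e > 0" for e
    proof -
      have "qr z < qr z + e / (\<beta> + 1)" using e beta_ge by simp
      then have "b \<le> inner a1 z + \<beta> * (qr z + e / (\<beta> + 1))" using hT[OF z] by blast
      moreover have "\<beta> * (e / (\<beta> + 1)) \<le> e"
        using e beta_ge by (simp add: field_simps)
      ultimately show ?thesis by (simp add: distrib_left)
    qed
    then show ?thesis by (rule field_le_epsilon)
  qed
  have beta_pos: "\<beta> > 0"
  proof (rule ccontr)
    assume "\<not> \<beta> > 0"
    then have b0: "\<beta> = 0" using beta_ge by simp
    then have a1nz: "a1 \<noteq> 0" using ab(1) a by (auto simp: zero_prod_def)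
    have pos: "inner a1 z \<ge> 0" if "z \<in> QQ" for z using hT2[OF that] b_ge b0 by simp
    have zero: "inner a1 z = 0" if z: "z \<in> QQ" for z
    proof -
      obtain e where e: "e > 0" "- (e *\<^sub>R z) \<in> QQ" using neg_small_in_QQ[OF z] by blast
      have "inner a1 (- (e *\<^sub>R z)) \<ge> 0" using pos[OF e(2)] .
      then have "e * inner a1 z \<le> 0" by simp
      then have "inner a1 z \<le> 0" using e(1) by (simp add: mult_le_0_iff)
      then show ?thesis using pos[OF z] by simp
    qed
    have "EE \<subseteq> {x. inner a1 x = 0}"
      unfolding EE_def by (rule span_minimal) (use zero subspace_hyperplane in auto)
    then have "inner a1 a1 = 0" using a1E by blast
    then show False using a1nz by simp
  qed
  define g where "g = - (1 / \<beta>) *\<^sub>R a1"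
  have "qr 0 + inner g z \<le> qr z" if z: "z \<in> QQ" for z
  proof -
    have "\<beta> * qr 0 \<le> inner a1 z + \<beta> * qr z" using hT2[OF z] b_ge by linarith
    then have "qr 0 - inner a1 z / \<beta> \<le> qr z" using beta_pos by (simp add: field_simps)
    then show ?thesis unfolding g_def by simp
  qed
  then show ?thesis by blast
qed

definition "SG = {y. \<forall>z\<in>QQ. qr 0 + inner y z \<le> qr z}"

lemma SG_iff: "y \<in> SG \<longleftrightarrow> d y \<le> ereal (- qr 0)"
  unfolding SG_def d_le_iff by (auto simp: algebra_simps)

lemma SG_ne: "SG \<noteq> {}" using subgrad_exists unfolding SG_def by blast

lemma argmin_SG: "argmin_set d = SG"
proof -
  obtain g0 where g0: "g0 \<in> SG" using SG_ne by blast
  show ?thesis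
  proof (intro set_eqI iffI)
    fix y assume "y \<in> argmin_set d"
    then have "d y \<le> d g0" unfolding argmin_set_def by blast
    then show "y \<in> SG" using g0 SG_iff order_trans by blast
  next
    fix y assume "y \<in> SG"
    then show "y \<in> argmin_set d" unfolding argmin_set_def using SG_iff d_ge order_trans by blast
  qed
qed

lemma dstar_eq: "(INF y. d y) = ereal (- qr 0)"
proof -
  obtain g0 where g0: "g0 \<in> SG" using SG_ne by blast
  have 1: "(INF y. d y) \<le> ereal (- qr 0)" using g0 SG_iff by (metis INF_lower2 UNIV_I)
  have 2: "ereal (- qr 0) \<le> (INF y. d y)" by (rule INF_greatest) (rule d_ge)
  show ?thesis using 1 2 by (rule antisym)
qed

lemma SG_decomp:
  assumes qE: "\<forall>y. qE y = q (PP y)"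
  shows "SG = {a + b | a b. a \<in> subdiff qE 0 \<and> b \<in> orthogonal_comp EE}"
proof (intro set_eqI iffI)
  have qE0: "qE 0 = ereal (qr 0)" using qE PP_self[OF zero_EE] q_fin[OF zero_QQ] by simp
  fix y assume y: "y \<in> SG"
  have "PP y \<in> subdiff qE 0"
    unfolding subdiff_def
  proof (intro CollectI conjI allI)
    show "\<bar>qE 0\<bar> \<noteq> \<infinity>" using qE0 by simp
    fix z
    show "qE 0 + ereal (inner (PP y) (z - 0)) \<le> qE z"
    proof (cases "PP z \<in> QQ")
      case False then show ?thesis using qE q_notQ by simp
    next
      case True
      have "qr 0 + inner y (PP z) \<le> qr (PP z)" using y True unfolding SG_def by blast
      moreover have "inner y (PP z) = inner (PP y) z"
        using inner_PP[OF PP_in, of y z] inner_PP[OF PP_in, of z y] by (simp add: inner_commute)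
      ultimately show ?thesis using qE0 qE q_fin[OF True] by simp
    qed
  qed
  moreover have "y = PP y + (y - PP y)" by simp
  ultimately show "y \<in> {a + b | a b. a \<in> subdiff qE 0 \<and> b \<in> orthogonal_comp EE}"
    using PP_resid by blast
next
  fix y assume "y \<in> {a + b | a b. a \<in> subdiff qE 0 \<and> b \<in> orthogonal_comp EE}"
  then obtain a b where ab: "y = a + b" "a \<in> subdiff qE 0" "b \<in> orthogonal_comp EE" by blast
  have qE0: "qE 0 = ereal (qr 0)" using qE PP_self[OF zero_EE] q_fin[OF zero_QQ] by simp
  show "y \<in> SG" unfolding SG_def
  proof (intro CollectI ballI)
    fix z assume z: "z \<in> QQ"
    have zE: "z \<in> EE" using z QQ_EE by blast
    have "qE 0 + ereal (inner a (z - 0)) \<le> qE z" using ab(2) unfolding subdiff_def by blast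
    then have "qr 0 + inner a z \<le> qr z" using qE0 qE PP_self[OF zE] q_fin[OF z] by simp
    moreover have "inner z b = 0" using ab(3) zE orth_iff by blast
    then have "inner b z = 0" by (simp add: inner_commute)
    ultimately show "qr 0 + inner y z \<le> qr z" using ab(1) by (simp add: inner_add_left)
  qed
qed

end

context dualsetup begin

lemma PP_cont: "continuous_on S PP"
  using PP_linear linear_conv_bounded_linear linear_continuous_on by blast

lemma coercive: "\<exists>r>0. \<exists>M. qr 0 \<le> M \<and> (\<forall>y. ereal (r * norm (PP y) - M) \<le> d y)"
proof -
  obtain \<rho> where \<rho>: "\<rho> > 0" "\<forall>u\<in>EE. norm u < \<rho> \<longrightarrow> u \<in> QQ" using ball_E by blast
  define U where "U = PP -` ball 0 \<rho>"
  have oU: "open U" unfolding U_def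
    using continuous_on_open_vimage[of UNIV PP] PP_cont by auto
  have cU: "convex U" unfolding U_def by (rule convex_linear_vimage[OF PP_linear convex_ball])
  have UQ: "PP y \<in> QQ" if "y \<in> U" for y
    using that \<rho> PP_in unfolding U_def by auto
  have conv: "convex_on U (\<lambda>y. qr (PP y))"
  proof (rule convex_onI[OF _ cU])
    fix t :: real and x y :: "real^'m" assume t: "0 < t" "t < 1" and xy: "x \<in> U" "y \<in> U"
    have "PP ((1 - t) *\<^sub>R x + t *\<^sub>R y) = t *\<^sub>R PP y + (1 - t) *\<^sub>R PP x"
      by (simp add: linear_add[OF PP_linear] linear_scale[OF PP_linear] add.commute)
    moreover have "qr (t *\<^sub>R PP y + (1 - t) *\<^sub>R PP x) \<le> t * qr (PP y) + (1 - t) * qr (PP x)"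
      using qr_convex[OF UQ[OF xy(2)] UQ[OF xy(1)], of t] t by simp
    ultimately show "qr (PP ((1 - t) *\<^sub>R x + t *\<^sub>R y)) \<le> (1 - t) * qr (PP x) + t * qr (PP y)"
      by simp
  qed
  have cont: "continuous_on U (\<lambda>y. qr (PP y))" by (rule convex_on_continuous[OF oU conv])
  define r where "r = \<rho> / 2"
  have r: "r > 0" "r < \<rho>" unfolding r_def using \<rho> by auto
  have cbU: "cball 0 r \<subseteq> U"
  proof
    fix y :: "real^'m" assume "y \<in> cball 0 r"
    then have "norm (PP y) < \<rho>" using PP_norm[of y] r by (simp add: dist_norm) 
    then show "y \<in> U" unfolding U_def by (simp add: dist_norm)
  qed
  obtain xm where xm: "xm \<in> cball 0 r" "\<forall>y\<in>cball 0 r. qr (PP y) \<le> qr (PP xm)"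
    using continuous_attains_sup[OF compact_cball _ continuous_on_subset[OF cont cbU]] r by auto
  define M where "M = qr (PP xm)"
  have M0: "qr 0 \<le> M" using xm(2)[rule_format, of 0] r PP_self[OF zero_EE] unfolding M_def by simp
  have "ereal (r * norm (PP y) - M) \<le> d y" for y
  proof (cases "PP y = 0")
    case True
    have "ereal (- M) \<le> ereal (- qr 0)" using M0 by simp
    then show ?thesis using d_ge[of y] True by (simp del: ereal_less_eq add: order_trans)
  next
    case False
    define u where "u = (r / norm (PP y)) *\<^sub>R PP y"
    have uE: "u \<in> EE" unfolding u_def using PP_in EE_subspace by (simp add: subspace_scale)
    have nu: "norm u = r" unfolding u_def using False r by simp
    then have uQ: "u \<in> QQ" using \<rho> uE r by auto
    have "qr u \<le> M" using xm(2)[rule_format, of u] nu PP_self[OF uE] unfolding M_def by simp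
    moreover have "inner y u = r * norm (PP y)"
    proof -
      have "inner y u = inner (PP y) u" by (rule inner_PP[OF uE])
      also have "\<dots> = (r / norm (PP y)) * (norm (PP y))\<^sup>2" unfolding u_def
        by (simp add: power2_norm_eq_inner)
      also have "\<dots> = r * norm (PP y)" using False by (simp add: power2_eq_square)
      finally show ?thesis .
    qed
    ultimately have "r * norm (PP y) - M \<le> inner y u - qr u" by simp
    then show ?thesis using d_lower[OF uQ, of y] order_trans ereal_less_eq(3) by blast
  qed
  then show ?thesis using r M0 by blast
qed

end

lemma alg_bound:
  fixes e n G P r m M :: real
  assumes "e \<le> n * G + n * P" "r * P \<le> m + e + M" "0 \<le> n" "n \<le> r/2" "r > 0" "0 \<le> e"
  shows "e \<le> n * (2 * (r * G + m + M) / r)"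
proof -
  have "r * e \<le> r * (n * G) + r * (n * P)" using assms(1,5) by (simp add: distrib_left[symmetric])
  moreover have "n * (r * P) \<le> n * (m + e + M)" using assms(2,3) by (rule mult_left_mono)
  ultimately have "r * e \<le> r * (n * G) + n * (m + e + M)" by (simp add: algebra_simps)
  then have "(r - n) * e \<le> n * (r * G + m + M)" by (simp add: algebra_simps)
  moreover have "(r/2) * e \<le> (r - n) * e" using assms by (intro mult_right_mono) auto
  ultimately have "(r/2) * e \<le> n * (r * G + m + M)" by linarith
  then have "e \<le> 2 * (n * (r * G + m + M)) / r" using assms(5) by (simp add: field_simps)
  then show ?thesis by (simp add: field_simps)
qed

context dualsetup begin

lemma SG_shift: "w \<in> SG \<Longrightarrow> v \<in> orthogonal_comp EE \<Longrightarrow> w + v \<in> SG"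
  using SG_iff d_shift by simp

lemma subgrad_bound:
  assumes r: "r > 0" and co: "\<forall>y. ereal (r * norm (PP y) - M) \<le> d y"
    and g0: "g0 \<in> SG" and g: "g \<in> subdiff d y" and gn: "norm g \<le> r/2"
  shows "\<exists>e. d y = ereal (- qr 0 + e) \<and> 0 \<le> e \<and> e \<le> norm g * (2 * (r * norm g0 + - qr 0 + M) / r)
          \<and> r * norm (PP y) \<le> - qr 0 + e + M"
proof -
  let ?m = "- qr 0"
  from g have fin: "\<bar>d y\<bar> \<noteq> \<infinity>" and sg: "\<forall>w. d y + ereal (inner g (w - y)) \<le> d w"
    unfolding subdiff_def by auto
  define e where "e = real_of_ereal (d y) - ?m"
  have dy: "d y = ereal (?m + e)" using fin unfolding e_def by (cases "d y") auto
  have e0: "0 \<le> e" using d_ge[of y] dy by simp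
  define w where "w = g0 + (y - PP y)"
  have wSG: "w \<in> SG" unfolding w_def by (rule SG_shift[OF g0 PP_resid])
  have "d w \<le> ereal ?m" using wSG SG_iff by blast
  moreover have "d y + ereal (inner g (w - y)) \<le> d w" using sg by blast
  moreover have "ereal (?m + e + inner g (w - y)) = d y + ereal (inner g (w - y))" using dy by simp
  ultimately have "ereal (?m + e + inner g (w - y)) \<le> ereal ?m" by (metis order_trans)
  then have "?m + e + inner g (w - y) \<le> ?m" by simp
  moreover have "w - y = g0 - PP y" unfolding w_def by simp
  ultimately have e1: "e \<le> - inner g (g0 - PP y)" by simp
  have "- inner g (g0 - PP y) \<le> norm g * norm (g0 - PP y)"
    using Cauchy_Schwarz_ineq2[of g "g0 - PP y"] by linarith
  also have "\<dots> \<le> norm g * (norm g0 + norm (PP y))"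
    by (intro mult_left_mono norm_triangle_ineq4) simp
  finally have e2: "e \<le> norm g * norm g0 + norm g * norm (PP y)" using e1 by (simp add: distrib_left)
  have P: "r * norm (PP y) \<le> ?m + e + M" using co[rule_format, of y] dy by simp
  have "e \<le> norm g * (2 * (r * norm g0 + ?m + M) / r)"
    by (rule alg_bound[OF e2 P norm_ge_zero gn r e0])
  then show ?thesis using dy e0 P by blast
qed

lemma edist_ge0: "0 \<le> edist_set x S"
  unfolding edist_set_def by (rule INF_greatest) simp

lemma seq_conv:
  fixes z :: "nat \<Rightarrow> real^'m"
  assumes lim: "(\<lambda>t. edist_set 0 (subdiff d (z t))) \<longlonglongrightarrow> 0"
  shows "((\<lambda>t. d (z t)) \<longlonglongrightarrow> (INF y. d y)) \<and> ((\<lambda>t. edist_set (z t) (argmin_set d)) \<longlonglongrightarrow> 0)"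
proof -
  obtain r M where r: "r > 0" and M: "qr 0 \<le> M" and co: "\<forall>y. ereal (r * norm (PP y) - M) \<le> d y"
    using coercive by blast
  obtain g0 where g0: "g0 \<in> SG" using SG_ne by blast
  define m where "m = - qr 0"
  define K where "K = 2 * (r * norm g0 + - qr 0 + M) / r"
  have "0 \<le> r * norm g0" using r by simp
  then have num: "0 \<le> 2 * (r * norm g0 + - qr 0 + M)" using M by (smt (verit))
  have K0: "K \<ge> 0" unfolding K_def using num r by simp
  have ev: "eventually (\<lambda>t. \<exists>g. g \<in> subdiff d (z t) \<and> norm g < \<epsilon>) sequentially" if eps: "\<epsilon> > 0" for \<epsilon>
  proof -
    have "eventually (\<lambda>t. edist_set 0 (subdiff d (z t)) < ereal \<epsilon>) sequentially"
      using order_tendstoD(2)[OF lim] eps by simp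
    then show ?thesis
      by eventually_elim (auto simp: edist_set_def INF_less_iff dist_norm)
  qed
  have ev2: "eventually (\<lambda>t. \<exists>e. d (z t) = ereal (m + e) \<and> 0 \<le> e \<and> e \<le> \<epsilon> * K
               \<and> r * norm (PP (z t)) \<le> m + e + M) sequentially"
    if eps: "\<epsilon> > 0" "\<epsilon> \<le> r/2" for \<epsilon>
    using ev[OF eps(1)]
  proof eventually_elim
    case (elim t)
    then obtain g where g: "g \<in> subdiff d (z t)" "norm g < \<epsilon>" by blast
    obtain e where e: "d (z t) = ereal (m + e)" "0 \<le> e" "e \<le> norm g * K"
       "r * norm (PP (z t)) \<le> m + e + M"
      using subgrad_bound[OF r co g0 g(1)] g(2) eps unfolding m_def K_def by force
    have "norm g * K \<le> \<epsilon> * K" using g(2) K0 by (intro mult_right_mono) auto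
    then show ?case using e by force
  qed
  have dstar: "(INF y. d y) = ereal m" using dstar_eq m_def by simp
  have tend_d: "(\<lambda>t. d (z t)) \<longlonglongrightarrow> ereal m"
  proof (rule order_tendstoI)
    fix a assume am: "a < ereal m"
    have "a < d (z t)" for t using am d_ge[of "z t"] unfolding m_def by (rule less_le_trans)
    then show "eventually (\<lambda>t. a < d (z t)) sequentially" by simp
  next
    fix a assume "ereal m < a"
    then obtain a' where a': "ereal m < ereal a'" "ereal a' < a" using ereal_dense2 by blast
    then have ma: "m < a'" by simp
    define \<epsilon> where "\<epsilon> = min (r/2) ((a' - m) / (K + 1))"
    have "(a' - m) / (K + 1) > 0" using ma K0 by simp
    then have eps1: "\<epsilon> > 0" unfolding \<epsilon>_def using r by auto
    have eps2: "\<epsilon> \<le> r/2" unfolding \<epsilon>_def by (rule min.cobounded1)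
    note eps = eps1 eps2
    have epsK: "\<epsilon> * K < a' - m"
    proof -
      have "\<epsilon> * K \<le> ((a' - m) / (K + 1)) * K" unfolding \<epsilon>_def using K0 by (intro mult_right_mono) auto
      also have "\<dots> < a' - m" using ma K0 by (simp add: field_simps)
      finally show ?thesis .
    qed
    show "eventually (\<lambda>t. d (z t) < a) sequentially"
      using ev2[OF eps]
    proof eventually_elim
      case (elim t)
      then obtain e where "d (z t) = ereal (m + e)" "e \<le> \<epsilon> * K" by blast
      then have "d (z t) < ereal a'" using epsK by simp
      then show ?case using a' by (meson less_trans)
    qed
  qed
  define B where "B = (m + (r/2) * K + M) / r"
  have r2: "r/2 > 0" using r by simp
  have bnd: "eventually (\<lambda>t. norm (PP (z t)) \<le> B) sequentially"
    using ev2[OF r2 order_refl]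
  proof eventually_elim
    case (elim t)
    then obtain e where "0 \<le> e" "e \<le> r/2 * K" "r * norm (PP (z t)) \<le> m + e + M" by auto
    then have "r * norm (PP (z t)) \<le> m + (r/2) * K + M" by linarith
    then show ?case unfolding B_def using r by (simp add: field_simps)
  qed
  have tend_e: "(\<lambda>t. edist_set (z t) (argmin_set d)) \<longlonglongrightarrow> 0"
  proof (rule order_tendstoI)
    fix a :: ereal assume a0: "a < 0"
    have "a < edist_set (z t) (argmin_set d)" for t using a0 edist_ge0 by (rule less_le_trans)
    then show "eventually (\<lambda>t. a < edist_set (z t) (argmin_set d)) sequentially" by simp
  next
    fix a :: ereal assume a: "0 < a"
    show "eventually (\<lambda>t. edist_set (z t) (argmin_set d) < a) sequentially"
    proof (rule ccontr)
      assume nev: "\<not> ?thesis"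
      have nev2: "\<not> eventually (\<lambda>t. norm (PP (z t)) \<le> B \<longrightarrow> edist_set (z t) (argmin_set d) < a) sequentially"
      proof
        assume "eventually (\<lambda>t. norm (PP (z t)) \<le> B \<longrightarrow> edist_set (z t) (argmin_set d) < a) sequentially"
        then have "eventually (\<lambda>t. edist_set (z t) (argmin_set d) < a) sequentially"
          using bnd by (rule eventually_mp)
        then show False using nev by contradiction
      qed
      from not_eventually_sequentiallyD[OF nev2] obtain \<sigma> where \<sigma>0: "strict_mono \<sigma> \<and>
        (\<forall>n::nat. \<not> (norm (PP (z (\<sigma> n))) \<le> B \<longrightarrow> edist_set (z (\<sigma> n)) (argmin_set d) < a))"
        by (rule exE)
      have \<sigma>: "strict_mono \<sigma>" "\<And>n. norm (PP (z (\<sigma> n))) \<le> B"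
        "\<And>n. \<not> edist_set (z (\<sigma> n)) (argmin_set d) < a"
        using \<sigma>0 by auto
      define w where "w n = PP (z (\<sigma> n))" for n
      have "bounded (range w)" unfolding bounded_iff
        by (intro exI[of _ B]) (auto simp: w_def \<sigma>(2))
      then obtain l \<tau> where \<tau>: "strict_mono \<tau>" "(w \<circ> \<tau>) \<longlonglongrightarrow> l"
        using bounded_imp_convergent_subsequence by blast
      have dlim: "(\<lambda>k. d (z (\<sigma> (\<tau> k)))) \<longlonglongrightarrow> ereal m"
        using LIMSEQ_subseq_LIMSEQ[OF tend_d strict_mono_o[OF \<sigma>(1) \<tau>(1)]] by (simp add: o_def)
      have lSG: "l \<in> SG"
        unfolding SG_iff d_le_iff
      proof
        fix q assume q: "q \<in> QQ"
        have "(\<lambda>k. ereal (inner (w (\<tau> k)) q - qr q)) \<longlonglongrightarrow> ereal (inner l q - qr q)"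
          using \<tau>(2) by (intro tendsto_ereal tendsto_diff tendsto_inner tendsto_const) (simp_all add: o_def)
        moreover have "ereal (inner (w (\<tau> k)) q - qr q) \<le> d (z (\<sigma> (\<tau> k)))" for k
          using d_lower[OF q, of "w (\<tau> k)"] d_PP unfolding w_def by simp
        ultimately have "ereal (inner l q - qr q) \<le> ereal m"
          using LIMSEQ_le[OF _ dlim] by blast
        then show "inner l q - qr q \<le> - qr 0" unfolding m_def by simp
      qed
      have "(\<lambda>k. w (\<tau> k) - l) \<longlonglongrightarrow> 0" using LIM_zero[OF \<tau>(2)] by (simp add: o_def)
      then have "(\<lambda>k. norm (w (\<tau> k) - l)) \<longlonglongrightarrow> 0" by (rule tendsto_norm_zero)
      then have lim3: "(\<lambda>k. ereal (norm (w (\<tau> k) - l))) \<longlonglongrightarrow> ereal 0" by (rule tendsto_ereal)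
      have a0: "ereal 0 < a" using a by (simp add: zero_ereal_def)
      have ev3: "eventually (\<lambda>k. ereal (norm (w (\<tau> k) - l)) < a) sequentially"
        by (rule order_tendstoD(2)[OF lim3 a0])
      have le: "edist_set (z (\<sigma> (\<tau> k))) (argmin_set d) \<le> ereal (norm (w (\<tau> k) - l))" for k
      proof -
        let ?y = "z (\<sigma> (\<tau> k))"
        have p: "l + (?y - PP ?y) \<in> argmin_set d" using SG_shift[OF lSG PP_resid] argmin_SG by simp
        have "dist ?y (l + (?y - PP ?y)) = norm (w (\<tau> k) - l)"
          unfolding w_def dist_norm by (simp add: norm_minus_commute algebra_simps)
        then show ?thesis unfolding edist_set_def by (intro INF_lower2[OF p]) simp
      qed
      from ev3 have "eventually (\<lambda>k. False) sequentially"
      proof eventually_elim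
        case (elim k)
        have "edist_set (z (\<sigma> (\<tau> k))) (argmin_set d) < a" using le[of k] elim by (rule le_less_trans)
        then show ?case using \<sigma>(3)[of "\<tau> k"] by blast
      qed
      then show False by simp
    qed
  qed
  show ?thesis using tend_d tend_e dstar by simp
qed

end

lemma mv_neg: "A *v (- x) = - (A *v x)" for A :: "real^'n::finite^'m::finite"
  using linear_neg[OF matrix_vector_mul_linear[of A]] by simp

lemma bp_linear: "linear (block_part blk i)"
  by (rule linearI) (auto simp: block_part_def vec_eq_iff)

lemma row_zero_comp: "row j M = 0 \<Longrightarrow> (M *v x) $ j = 0"
  for M :: "real^'n::finite^'m::finite"
proof -
  assume "row j M = 0"
  then have "\<forall>k. M $ j $ k = 0" unfolding row_def by (simp add: vec_eq_iff)
  then show ?thesis by (simp add: matrix_vector_mult_def)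
qed

lemma sum_mv: "finite S \<Longrightarrow> (sum f S) *v x = (\<Sum>i\<in>S. f i *v x)"
  for f :: "nat \<Rightarrow> real^'n::finite^'m::finite"
  by (induction S rule: finite_induct) (auto simp: matrix_vector_mult_add_rdistrib)

lemma bp_A:
  fixes blk :: "'m::finite \<Rightarrow> nat" and Ab :: "nat \<Rightarrow> real^'n::finite^'m"
  assumes Ab_block: "\<forall>i<l. \<forall>j. blk j \<noteq> i \<longrightarrow> row j (Ab i) = 0"
    and i: "i < l"
  shows "block_part blk i ((\<Sum>i<l. Ab i) *v x) = Ab i *v x"
proof -
  have "block_part blk i ((\<Sum>i<l. Ab i) *v x) $ j = (Ab i *v x) $ j" for j
  proof (cases "blk j = i")
    case True
    have "((\<Sum>i<l. Ab i) *v x) $ j = (\<Sum>i'<l. (Ab i' *v x) $ j)"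
      by (simp add: sum_mv sum_component)
    also have "\<dots> = (\<Sum>i'<l. if i' = i then (Ab i *v x) $ j else 0)"
      using Ab_block True by (intro sum.cong) (auto intro: row_zero_comp)
    also have "\<dots> = (Ab i *v x) $ j" using i by simp
    finally show ?thesis using True by (simp add: block_part_def)
  next
    case False
    then show ?thesis using Ab_block i by (simp add: block_part_def row_zero_comp)
  qed
  then show ?thesis by (simp add: vec_eq_iff)
qed

theorem proposition3p3:
  fixes l :: nat
    and blk :: "'m::finite \<Rightarrow> nat"
    and C :: "nat \<Rightarrow> (real^'m) set"
    and Ab :: "nat \<Rightarrow> real^'n::finite^'m"
    and vbar :: "real^'n"
    and A :: "real^'n^'m"
    and D :: "(real^'m) set"
    and f :: "real^'n \<Rightarrow> real"
    and d :: "real^'m \<Rightarrow> ereal"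
    and dstar :: ereal
    and q :: "real^'m \<Rightarrow> ereal"
    and E :: "(real^'m) set"
    and qE :: "real^'m \<Rightarrow> ereal"
  assumes l_pos: "l \<ge> 1"
    and blk_range: "\<forall>j. blk j < l"
    and blk_nonempty: "\<forall>i<l. \<exists>j. blk j = i"
    and C_sub: "\<forall>i<l. C i \<subseteq> block_space blk i"
    and C_ne: "\<forall>i<l. C i \<noteq> {}"
    and C_closed: "\<forall>i<l. closed (C i)"
    and C_convex: "\<forall>i<l. convex (C i)"
    and Ab_block: "\<forall>i<l. \<forall>j. blk j \<noteq> i \<longrightarrow> row j (Ab i) = 0"
    and Ab_nz: "\<forall>i<l. Ab i \<noteq> 0"
    and qual: "(\<Inter>i<l. {x. Ab i *v x \<in> rel_interior (C i)}) \<noteq> {}"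
    and A_def: "A = (\<Sum>i<l. Ab i)"
    and D_def: "D = {y. \<forall>i<l. block_part blk i y \<in> C i}"
    and f_def: "\<forall>x. f x = (1/2) * (norm (x - vbar))\<^sup>2"
    and d_def: "\<forall>y. d y = ereal ((1/2) * (norm (transpose A *v y - vbar))\<^sup>2
                               - (1/2) * (norm vbar)\<^sup>2) + support_fun D y"
    and dstar_def: "dstar = (INF y. d y)"
    and q_def: "\<forall>y. q y = (INF x\<in>{x. A *v x + y \<in> D}. ereal (f x))"
    and E_def: "E = span (edom q)"
    and qE_def: "\<forall>y. qE y = q (proj_sub E y)"
  shows "0 \<in> rel_interior (edom q)
    \<and> E = span {c - A *v x | c x. c \<in> D}
    \<and> (\<forall>y. d y = conjugate q y)
    \<and> argmin_set d = {a + b | a b. a \<in> subdiff qE 0 \<and> b \<in> orthogonal_comp E}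
    \<and> argmin_set d \<noteq> {}
    \<and> (\<forall>z :: nat \<Rightarrow> real^'m.
          ((\<lambda>t. edist_set 0 (subdiff d (z t))) \<longlonglongrightarrow> 0) \<longrightarrow>
            ((\<lambda>t. d (z t)) \<longlonglongrightarrow> dstar) \<and>
            ((\<lambda>t. edist_set (z t) (argmin_set d)) \<longlonglongrightarrow> 0))"
proof -
  obtain x0 where x0: "\<forall>i<l. Ab i *v x0 \<in> rel_interior (C i)" using qual by blast
  have bpA: "block_part blk i (A *v x) = Ab i *v x" if "i < l" for i x
    unfolding A_def by (rule bp_A[OF Ab_block that])
  define F where "F = (\<lambda>i. block_part blk i -` C i) ` {..<l}"
  have DF: "D = \<Inter>F" unfolding D_def F_def by auto
  have preim: "rel_interior (block_part blk i -` C i) = block_part blk i -` rel_interior (C i)"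
    if i: "i < l" for i
  proof (rule rel_interior_convex_linear_preimage[OF bp_linear])
    show "convex (C i)" using C_convex i by blast
    show "block_part blk i -` rel_interior (C i) \<noteq> {}" using x0 bpA i by blast
  qed
  have riD: "A *v x0 \<in> rel_interior D"
  proof -
    have cF: "\<And>S. S \<in> F \<Longrightarrow> convex S"
      unfolding F_def using C_convex convex_linear_vimage[OF bp_linear] by blast
    have inAll: "A *v x0 \<in> \<Inter>(rel_interior ` F)"
      unfolding F_def using preim x0 bpA by auto
    have "rel_interior (\<Inter>F) = \<Inter>(rel_interior ` F)"
      by (rule convex_rel_interior_finite_Inter[OF cF]) (use inAll F_def in auto)
    then show ?thesis using inAll DF by simp
  qed
  have Dconv: "convex D" using DF C_convex convex_linear_vimage[OF bp_linear] unfolding F_def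
    by (auto intro!: convex_Inter)
  have Dne: "D \<noteq> {}" using riD rel_interior_subset by blast
  define R where "R = range (\<lambda>x. A *v x)"
  have subR: "subspace R" unfolding R_def
    by (rule linear_subspace_image[OF matrix_vector_mul_linear subspace_UNIV])
  have QR: "{c - A *v x | c x. c \<in> D} = D + R"
  proof (intro set_eqI iffI)
    fix y assume "y \<in> {c - A *v x | c x. c \<in> D}"
    then obtain c x where "y = c - A *v x" "c \<in> D" by blast
    moreover have "- (A *v x) = A *v (- x)" by (simp add: mv_neg)
    ultimately show "y \<in> D + R" unfolding set_plus_def R_def
      by (metis (mono_tags, lifting) diff_conv_add_uminus mem_Collect_eq rangeI)
  next
    fix y assume "y \<in> D + R"
    then obtain c x where "y = c + A *v x" "c \<in> D" unfolding set_plus_def R_def by blast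
    moreover have "c + A *v x = c - A *v (- x)" by (simp add: mv_neg)
    ultimately show "y \<in> {c - A *v x | c x. c \<in> D}" by blast
  qed
  have ri0: "0 \<in> rel_interior {c - A *v x | c x. c \<in> D}"
  proof -
    have "rel_interior (D + R) = rel_interior D + rel_interior R"
      by (rule rel_interior_sum[OF Dconv subspace_imp_convex[OF subR]])
    moreover have "rel_interior R = R" by (rule rel_interior_affine[OF subspace_imp_affine[OF subR]])
    moreover have "- (A *v x0) \<in> R" unfolding R_def
      by (metis mv_neg rangeI)
    ultimately have "A *v x0 + - (A *v x0) \<in> rel_interior (D + R)"
      using riD set_plus_intro[of "A *v x0" "rel_interior D" "- (A *v x0)" R] by simp
    then show ?thesis using QR by simp
  qed
  interpret ds: dualsetup A D vbar f q d
    by unfold_locales (use Dconv Dne f_def d_def q_def ri0 in auto)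
  have edomQ: "edom q = ds.QQ"
    unfolding edom_def using ds.q_notQ ds.q_fin by force
  have EEq: "E = ds.EE" unfolding E_def ds.EE_def edomQ ..
  have qE: "\<forall>y. qE y = q (ds.PP y)"
    using qE_def unfolding proj_sub_def ds.PP_def EEq by simp
  have p1: "0 \<in> rel_interior (edom q)" using ri0 edomQ ds.QQ_def by simp
  have p2: "E = span {c - A *v x | c x. c \<in> D}" using EEq ds.EE_def ds.QQ_def by simp
  have p4: "argmin_set d = {a + b | a b. a \<in> subdiff qE 0 \<and> b \<in> orthogonal_comp E}"
    using ds.argmin_SG ds.SG_decomp[OF qE] EEq by simp
  have p5: "argmin_set d \<noteq> {}" using ds.argmin_SG ds.SG_ne by simp
  show ?thesis using p1 p2 ds.d_eq p4 p5 ds.seq_conv dstar_def by blast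
qed

end
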